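(* Let $F$ be $\mathbb{C}$ or $\mathbb{R}$ and let $\mathfrak{L}$ be a solvable (left) Leibniz algebra over $F$ of dimension $r+1$ whose nilradical is the $r$-dimensional abelian algebra $A(r)$. Let $\{n_1,\dots,n_r,x\}$ be a basis of $\mathfrak{L}$ with $n_1,\dots,n_r$ a basis of $A(r)$ and $x\notin A(r)$, and write $$[x,n_i]=\sum_{j} L_{ij}n_j,\qquad [n_i,x]=\sum_j R_{ij}n_j,\qquad [x,x]=\sum_j\sigma_j n_j,$$ with $L,R\in F^{r\times r}$, $\sigma=(\sigma_1,\dots,\sigma_r)^T\in F^r$. Assume the basis $n_1,\dots,n_r$ is chosen so that $R$ is in Jordan canonical form (block diagonal, each block upper triangular with a single eigenvalue on the diagonal and $1$'s on the superdiagonal). Then: (1) $\sigma$ lies in the null space of $R^T$, i.e. $R^T\sigma=0$; (2) for all $i,j$, if $R_{ij}\neq 0$ then $\sigma_i=0$.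
   Context: A (left) Leibniz algebra is a vector space with bilinear product satisfying $[x,[y,z]]=[[x,y],z]+[y,[x,z]]$. Solvable: derived series $\mathfrak{L}^{(1)}=[\mathfrak{L},\mathfrak{L}]$, $\mathfrak{L}^{(n+1)}=[\mathfrak{L}^{(n)},\mathfrak{L}^{(n)}]$ eventually zero. Nilradical: the unique maximal nilpotent ideal (nilpotent meaning the lower central series $\mathfrak{L}^2=[\mathfrak{L},\mathfrak{L}]$, $\mathfrak{L}^{k+1}=[\mathfrak{L},\mathfrak{L}^k]$ eventually vanishes). $A(r)$ is the $r$-dimensional algebra with all products zero. *)

theory Defs
  imports Complex_Main
begin

definition leibniz_algebra ::
  "('a::field \<Rightarrow> 'v::ab_group_add \<Rightarrow> 'v) \<Rightarrow> ('v \<Rightarrow> 'v \<Rightarrow> 'v) \<Rightarrow> bool" where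
  "leibniz_algebra scale b \<longleftrightarrow>
     vector_space scale \<and>
     (\<forall>u v w. b (u + v) w = b u w + b v w) \<and>
     (\<forall>u v w. b u (v + w) = b u v + b u w) \<and>
     (\<forall>c u v. b (scale c u) v = scale c (b u v)) \<and>
     (\<forall>c u v. b u (scale c v) = scale c (b u v)) \<and>
     (\<forall>x y z. b x (b y z) = b (b x y) z + b y (b x z))"

definition brk ::
  "('a::field \<Rightarrow> 'v::ab_group_add \<Rightarrow> 'v) \<Rightarrow> ('v \<Rightarrow> 'v \<Rightarrow> 'v) \<Rightarrow> 'v set \<Rightarrow> 'v set \<Rightarrow> 'v set" where
  "brk scale b A B = module.span scale {b u v | u v. u \<in> A \<and> v \<in> B}"

fun derived ::
  "('a::field \<Rightarrow> 'v::ab_group_add \<Rightarrow> 'v) \<Rightarrow> ('v \<Rightarrow> 'v \<Rightarrow> 'v) \<Rightarrow> nat \<Rightarrow> 'v set" where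
  "derived scale b 0 = UNIV"
| "derived scale b (Suc k) = brk scale b (derived scale b k) (derived scale b k)"

definition solvable ::
  "('a::field \<Rightarrow> 'v::ab_group_add \<Rightarrow> 'v) \<Rightarrow> ('v \<Rightarrow> 'v \<Rightarrow> 'v) \<Rightarrow> bool" where
  "solvable scale b \<longleftrightarrow> (\<exists>k. derived scale b k = {0})"

definition lideal ::
  "('a::field \<Rightarrow> 'v::ab_group_add \<Rightarrow> 'v) \<Rightarrow> ('v \<Rightarrow> 'v \<Rightarrow> 'v) \<Rightarrow> 'v set \<Rightarrow> bool" where
  "lideal scale b I \<longleftrightarrow> module.subspace scale I \<and> (\<forall>u\<in>I. \<forall>v. b u v \<in> I \<and> b v u \<in> I)"

text \<open>Lower central series of a subalgebra I (as an algebra in its own right):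
  lcs 0 = I (i.e. I^1), lcs (k+1) = [I, lcs k].\<close>
fun lcs ::
  "('a::field \<Rightarrow> 'v::ab_group_add \<Rightarrow> 'v) \<Rightarrow> ('v \<Rightarrow> 'v \<Rightarrow> 'v) \<Rightarrow> 'v set \<Rightarrow> nat \<Rightarrow> 'v set" where
  "lcs scale b I 0 = I"
| "lcs scale b I (Suc k) = brk scale b I (lcs scale b I k)"

definition nilpotent_sub ::
  "('a::field \<Rightarrow> 'v::ab_group_add \<Rightarrow> 'v) \<Rightarrow> ('v \<Rightarrow> 'v \<Rightarrow> 'v) \<Rightarrow> 'v set \<Rightarrow> bool" where
  "nilpotent_sub scale b I \<longleftrightarrow> (\<exists>k. lcs scale b I k = {0})"

definition is_nilradical ::
  "('a::field \<Rightarrow> 'v::ab_group_add \<Rightarrow> 'v) \<Rightarrow> ('v \<Rightarrow> 'v \<Rightarrow> 'v) \<Rightarrow> 'v set \<Rightarrow> bool" where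
  "is_nilradical scale b N \<longleftrightarrow>
     lideal scale b N \<and> nilpotent_sub scale b N \<and>
     (\<forall>J. lideal scale b J \<and> nilpotent_sub scale b J \<longrightarrow> J \<subseteq> N)"

text \<open>An r x r matrix (indices 1..r) is in Jordan canonical form: all entries vanish
  except the diagonal and superdiagonal; each superdiagonal entry is 0 or 1, and when it
  is 1 the two adjacent diagonal entries coincide (same Jordan block).\<close>
definition jordan_form :: "nat \<Rightarrow> (nat \<Rightarrow> nat \<Rightarrow> 'a::field) \<Rightarrow> bool" where
  "jordan_form r M \<longleftrightarrow>
     (\<forall>i\<in>{1..r}. \<forall>j\<in>{1..r}. j \<noteq> i \<and> j \<noteq> i + 1 \<longrightarrow> M i j = 0) \<and>
     (\<forall>i. 1 \<le> i \<and> i < r \<longrightarrow>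
        M i (i + 1) = 0 \<or> (M i (i + 1) = 1 \<and> M i i = M (i + 1) (i + 1)))"

definition field_iso :: "('a::field \<Rightarrow> 'b::field) \<Rightarrow> bool" where
  "field_iso h \<longleftrightarrow> bij h \<and> (\<forall>u v. h (u + v) = h u + h v) \<and> (\<forall>u v. h (u * v) = h u * h v)"

end

theory Submission
  imports Defs
begin

theorem lemma4p1:
  fixes scale :: "'a::field \<Rightarrow> 'v::ab_group_add \<Rightarrow> 'v"
    and b :: "'v \<Rightarrow> 'v \<Rightarrow> 'v"
    and r :: nat
    and n :: "nat \<Rightarrow> 'v" and x :: 'v
    and L R :: "nat \<Rightarrow> nat \<Rightarrow> 'a" and \<sigma> :: "nat \<Rightarrow> 'a"
  assumes F_R_or_C: "(\<exists>h::'a \<Rightarrow> real. field_iso h) \<or> (\<exists>h::'a \<Rightarrow> complex. field_iso h)"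
    and leib: "leibniz_algebra scale b"
    and solv: "solvable scale b"
    and inj_n: "inj_on n {1..r}"
    and x_notin: "x \<notin> module.span scale (n ` {1..r})"
    and basis_indep: "\<not> module.dependent scale (insert x (n ` {1..r}))"
    and basis_span: "module.span scale (insert x (n ` {1..r})) = UNIV"
    and nilrad: "is_nilradical scale b (module.span scale (n ` {1..r}))"
    and abelian: "\<forall>u \<in> module.span scale (n ` {1..r}). \<forall>v \<in> module.span scale (n ` {1..r}). b u v = 0"
    and L_def: "\<forall>i\<in>{1..r}. b x (n i) = (\<Sum>j=1..r. scale (L i j) (n j))"
    and R_def: "\<forall>i\<in>{1..r}. b (n i) x = (\<Sum>j=1..r. scale (R i j) (n j))"
    and sigma_def: "b x x = (\<Sum>j=1..r. scale (\<sigma> j) (n j))"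
    and R_jordan: "jordan_form r R"
  shows "(\<forall>j\<in>{1..r}. (\<Sum>i=1..r. R i j * \<sigma> i) = 0)
         \<and> (\<forall>i\<in>{1..r}. \<forall>j\<in>{1..r}. R i j \<noteq> 0 \<longrightarrow> \<sigma> i = 0)"
proof -
  interpret V: vector_space scale using leib unfolding leibniz_algebra_def by blast
  have addl: "\<And>u v w. b (u + v) w = b u w + b v w" using leib unfolding leibniz_algebra_def by blast
  have sl: "\<And>c u v. b (scale c u) v = scale c (b u v)" using leib unfolding leibniz_algebra_def by blast
  have lei: "\<And>x y z. b x (b y z) = b (b x y) z + b y (b x z)" using leib unfolding leibniz_algebra_def by blast
  have b0: "\<And>w. b 0 w = 0"
  proof -
    fix w have "b (0+0) w = b 0 w + b 0 w" by (rule addl)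
    thus "b 0 w = 0" by simp
  qed
  have bsum: "\<And>(f::nat \<Rightarrow> 'v) A w. finite A \<Longrightarrow> b (sum f A) w = (\<Sum>a\<in>A. b (f a) w)"
  proof -
    fix f :: "nat \<Rightarrow> 'v" and A :: "nat set" and w
    assume "finite A"
    thus "b (sum f A) w = (\<Sum>a\<in>A. b (f a) w)"
      by (induction A rule: finite_induct) (auto simp: b0 addl)
  qed
  have xx: "b (b x x) x = 0" using lei[of x x x] by simp
  define c where "c k = (\<Sum>j=1..r. \<sigma> j * R j k)" for k
  have "b (b x x) x = (\<Sum>j=1..r. scale (\<sigma> j) (\<Sum>k=1..r. scale (R j k) (n k)))"
    unfolding sigma_def by (simp add: bsum sl R_def)
  also have "\<dots> = (\<Sum>j=1..r. \<Sum>k=1..r. scale (\<sigma> j * R j k) (n k))"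
    by (simp add: V.scale_sum_right)
  also have "\<dots> = (\<Sum>k=1..r. scale (c k) (n k))"
    unfolding c_def by (subst sum.swap) (simp add: V.scale_sum_left)
  finally have csum: "(\<Sum>k=1..r. scale (c k) (n k)) = 0" using xx by simp
  have indep: "\<not> V.dependent (n ` {1..r})"
    using basis_indep V.dependent_mono by blast
  have c0: "\<forall>k\<in>{1..r}. c k = 0"
  proof (rule ccontr)
    assume "\<not> ?thesis"
    then obtain k where k: "k \<in> {1..r}" "c k \<noteq> 0" by auto
    define u where "u v = c (the_inv_into {1..r} n v)" for v
    have "(\<Sum>v\<in>n ` {1..r}. scale (u v) v) = (\<Sum>k=1..r. scale (u (n k)) (n k))"
      by (rule sum.reindex[OF inj_n, unfolded comp_def])
    also have "\<dots> = (\<Sum>k=1..r. scale (c k) (n k))"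
      unfolding u_def proof (intro sum.cong refl)
      fix k assume "k \<in> {1..r}"
      thus "scale (c (the_inv_into {1..r} n (n k))) (n k) = scale (c k) (n k)"
        using the_inv_into_f_f[OF inj_n] by metis
    qed
    finally have "(\<Sum>v\<in>n ` {1..r}. scale (u v) v) = 0" using csum by simp
    moreover have "u (n k) \<noteq> 0" using k the_inv_into_f_f[OF inj_n, of k] by (simp add: u_def)
    ultimately have "V.dependent (n ` {1..r})"
      using k by (subst V.dependent_finite) (auto intro!: exI[of _ u])
    thus False using indep by simp
  qed
  have P1: "\<forall>j\<in>{1..r}. (\<Sum>i=1..r. R i j * \<sigma> i) = 0"
    using c0 unfolding c_def by (simp add: mult.commute)
  have J1: "\<And>i j. i\<in>{1..r} \<Longrightarrow> j\<in>{1..r} \<Longrightarrow> j \<noteq> i \<Longrightarrow> j \<noteq> i + 1 \<Longrightarrow> R i j = 0"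
    using R_jordan unfolding jordan_form_def by blast
  have J2: "\<And>i. 1 \<le> i \<Longrightarrow> i < r \<Longrightarrow> R i (i + 1) = 0 \<or> (R i (i + 1) = 1 \<and> R i i = R (i + 1) (i + 1))"
    using R_jordan unfolding jordan_form_def by blast
  have col: "\<And>k. k \<in> {1..r} \<Longrightarrow> R k k * \<sigma> k + (if k \<ge> 2 then R (k-1) k * \<sigma> (k-1) else 0) = 0"
  proof -
    fix k assume k: "k \<in> {1..r}"
    have "(\<Sum>i=1..r. R i k * \<sigma> i) = (\<Sum>i\<in>{k} \<union> (if k \<ge> 2 then {k-1} else {}). R i k * \<sigma> i)"
    proof (intro sum.mono_neutral_right)
      show "finite {1..r}" by simp
      show "{k} \<union> (if k \<ge> 2 then {k-1} else {}) \<subseteq> {1..r}" using k by auto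
      show "\<forall>i\<in>{1..r} - ({k} \<union> (if k \<ge> 2 then {k-1} else {})). R i k * \<sigma> i = 0"
      proof
        fix i assume i: "i \<in> {1..r} - ({k} \<union> (if k \<ge> 2 then {k-1} else {}))"
        hence "k \<noteq> i" "k \<noteq> i + 1" "i \<in> {1..r}" by (auto split: if_splits)
        thus "R i k * \<sigma> i = 0" using J1[of i k] k by simp
      qed
    qed
    also have "\<dots> = R k k * \<sigma> k + (if k \<ge> 2 then R (k-1) k * \<sigma> (k-1) else 0)"
      by (cases "k \<ge> 2") auto
    finally show "?thesis k" using P1 k by simp
  qed
  have diag: "\<And>i. i \<in> {1..r} \<Longrightarrow> R i i \<noteq> 0 \<Longrightarrow> \<sigma> i = 0"
  proof -
    fix i show "i \<in> {1..r} \<Longrightarrow> R i i \<noteq> 0 \<Longrightarrow> \<sigma> i = 0"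
    proof (induction i rule: less_induct)
      case (less i)
      show ?case
      proof (cases "i \<ge> 2")
        case False
        thus ?thesis using col[OF less.prems(1)] less.prems by simp
      next
        case True
        have c: "R i i * \<sigma> i + R (i-1) i * \<sigma> (i-1) = 0" using col[OF less.prems(1)] True by simp
        have j: "R (i-1) (i-1+1) = 0 \<or> (R (i-1) (i-1+1) = 1 \<and> R (i-1) (i-1) = R (i-1+1) (i-1+1))"
          using J2[of "i-1"] True less.prems(1) by simp
        have "R (i-1) i * \<sigma> (i-1) = 0"
        proof (cases "R (i-1) i = 0")
          case False
          with j True have "R (i-1) (i-1) = R i i" by simp
          moreover have "i-1 \<in> {1..r}" "i - 1 < i" using True less.prems(1) by auto
          ultimately have "\<sigma> (i-1) = 0" using less.IH[of "i-1"] less.prems(2) by simp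
          thus ?thesis by simp
        qed simp
        hence "R i i * \<sigma> i = 0" using c by (metis add.right_neutral)
        thus ?thesis using less.prems(2) by simp
      qed
    qed
  qed
  have P2: "\<forall>i\<in>{1..r}. \<forall>j\<in>{1..r}. R i j \<noteq> 0 \<longrightarrow> \<sigma> i = 0"
  proof (intro ballI impI)
    fix i j assume i: "i \<in> {1..r}" and j: "j \<in> {1..r}" and R: "R i j \<noteq> 0"
    show "\<sigma> i = 0"
    proof (cases "R i i = 0")
      case False thus ?thesis using diag i by blast
    next
      case True
      have ji: "j = i + 1" using J1[of i j] i j R True by (cases "j = i") auto
      have "i < r" using ji j by simp
      hence "R i (i+1) = 1 \<and> R i i = R (i+1) (i+1)" using J2[of i] i R ji by auto
      moreover have "R (i+1) (i+1) * \<sigma> (i+1) + R i (i+1) * \<sigma> i = 0"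
        using col[of "i+1"] j ji i by auto
      ultimately show ?thesis using True by simp
    qed
  qed
  show ?thesis using P1 P2 by blast
qed

end
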